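(* Let $d$ be a positive integer, let $z\in\mathbb{S}^d\subset\mathbb{R}^{d+1}$, and identify $\mathbb{S}^{d-1}$ with $\mathbb{S}^d\cap z^\perp$ (the unit sphere of the $d$-dimensional subspace $z^\perp$). Define $f:\mathbb{S}^{d-1}\to\mathbb{S}^d$ by $$f(x)=\sqrt{\tfrac{d}{d+1}}\,x+\tfrac{1}{\sqrt{d+1}}\,z,$$ and for a Borel probability measure $\mu$ on $\mathbb{S}^{d-1}$ let $\mu_l=f_*\mu$ be its pushforward. Then $\mu$ is balanced and isotropic on $\mathbb{S}^{d-1}$ if and only if $\mu_l$ is isotropic on $\mathbb{S}^d$.
   Context: A Borel probability measure $\nu$ on the unit sphere $\mathbb{S}^{n-1}$ of an $n$-dimensional Euclidean space is isotropic if $\int\langle x,y\rangle^2\,d\nu(x)=\frac1n$ for every unit vector $y$ in that space, and balanced if $\int x\,d\nu(x)=0$. *)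

theory Defs
  imports "HOL-Probability.Probability"
begin

definition sphere_prob :: "'a::euclidean_space set \<Rightarrow> 'a measure \<Rightarrow> bool" where
  "sphere_prob V \<nu> \<longleftrightarrow> prob_space \<nu> \<and> sets \<nu> = sets (restrict_space borel (sphere 0 1 \<inter> V))"

definition isotropic :: "'a::euclidean_space set \<Rightarrow> 'a measure \<Rightarrow> bool" where
  "isotropic V \<nu> \<longleftrightarrow> (\<forall>y\<in>V. norm y = 1 \<longrightarrow> (\<integral>x. (x \<bullet> y)\<^sup>2 \<partial>\<nu>) = 1 / real (dim V))"

definition balanced :: "'a::euclidean_space measure \<Rightarrow> bool" where
  "balanced \<nu> \<longleftrightarrow> (\<integral>x. x \<partial>\<nu>) = 0"

end

theory Submission
  imports Defs
begin

theorem lemma5p3: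
  fixes z :: "'a::euclidean_space" and \<mu> :: "'a measure"
  assumes "DIM('a) \<ge> 2"
    and "norm z = 1"
    and "sphere_prob {x. x \<bullet> z = 0} \<mu>"
  shows "(balanced \<mu> \<and> isotropic {x. x \<bullet> z = 0} \<mu>) \<longleftrightarrow>
    isotropic UNIV (distr \<mu> (restrict_space borel (sphere 0 1))
      (\<lambda>x. sqrt ((real DIM('a) - 1) / real DIM('a)) *\<^sub>R x + (1 / sqrt (real DIM('a))) *\<^sub>R z))"
proof -
  define N where "N = real DIM('a)"
  define a where "a = sqrt ((N - 1) / N)"
  define b where "b = 1 / sqrt N"
  define V where "V = {x::'a. x \<bullet> z = 0}"
  define f where "f = (\<lambda>x. a *\<^sub>R x + b *\<^sub>R z)"
  have N2: "N \<ge> 2" using assms(1) unfolding N_def by simp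
  have a2: "a^2 = (N - 1) / N" unfolding a_def using N2 by simp
  have b2: "b^2 = 1 / N" unfolding b_def using N2 by (simp add: power_divide)
  have ab1: "a^2 + b^2 = 1"
  proof -
    have "a^2 + b^2 = (N - 1) / N + 1 / N" by (simp add: a2 b2)
    also have "\<dots> = 1" using N2 by (simp add: field_simps)
    finally show ?thesis .
  qed
  have ab: "a * b > 0" unfolding a_def b_def using N2 by simp
  have zz: "z \<bullet> z = 1" using assms(2) by (simp add: norm_eq_1)
  have ps: "prob_space \<mu>" and sets: "sets \<mu> = sets (restrict_space borel (sphere 0 1 \<inter> V))"
    using assms(3) unfolding sphere_prob_def V_def by auto
  interpret P: prob_space \<mu> by (rule ps)
  have sp: "space \<mu> = sphere 0 1 \<inter> V"
    using sets_eq_imp_space_eq[OF sets] by (simp add: space_restrict_space)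
  have meas: "g \<in> borel_measurable \<mu>" if "g \<in> borel_measurable borel" for g :: "'a \<Rightarrow> 'b::topological_space"
    using measurable_cong_sets[OF sets refl] measurable_restrict_space1[OF that] by blast
  have nx: "norm x = 1" "x \<bullet> z = 0" if "x \<in> space \<mu>" for x using that sp V_def by auto
  have int1: "integrable \<mu> (\<lambda>x. x \<bullet> y)" for y
    by (rule P.integrable_const_bound[where B="norm y"])
       (auto intro!: meas AE_I2 simp: nx, metis Cauchy_Schwarz_ineq2 mult_1 nx(1))
  have int2: "integrable \<mu> (\<lambda>x. (x \<bullet> y)^2)" for y
  proof (rule P.integrable_const_bound[where B="(norm y)^2"])
    show "AE x in \<mu>. norm ((x \<bullet> y)^2) \<le> (norm y)^2"
    proof (rule AE_I2)
      fix x assume "x \<in> space \<mu>"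
      then have xy: "\<bar>x \<bullet> y\<bar> \<le> norm y" using Cauchy_Schwarz_ineq2[of x y] nx by simp
      show "norm ((x \<bullet> y)^2) \<le> (norm y)^2"
        using power_mono[OF xy abs_ge_zero, of 2] by simp
    qed
  qed (auto intro!: meas)
  have int3: "integrable \<mu> (\<lambda>x. x)"
    by (rule P.integrable_const_bound[where B=1]) (auto intro!: meas simp: nx)
  define m where "m = (\<integral>x. x \<partial>\<mu>)"
  have im: "(\<integral>x. x \<bullet> y \<partial>\<mu>) = m \<bullet> y" for y
    unfolding m_def using int3 by simp
  have mz: "m \<bullet> z = 0"
  proof -
    have "(\<integral>x. x \<bullet> z \<partial>\<mu>) = (\<integral>x. 0 \<partial>\<mu>)" by (intro Bochner_Integration.integral_cong refl) (auto simp: nx)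
    then show ?thesis using im by simp
  qed
  have fmeas: "f \<in> measurable \<mu> (restrict_space borel (sphere 0 1))"
  proof (rule measurable_restrict_space2)
    show "f \<in> space \<mu> \<rightarrow> sphere 0 1"
    proof
      fix x assume x: "x \<in> space \<mu>"
      have "(f x) \<bullet> (f x) = a^2 * (x \<bullet> x) + 2 * a * b * (x \<bullet> z) + b^2 * (z \<bullet> z)"
        unfolding f_def by (simp add: inner_add_left inner_add_right inner_commute power2_eq_square algebra_simps)
      also have "\<dots> = 1" using nx[OF x] zz ab1 by (simp add: norm_eq_1)
      finally show "f x \<in> sphere 0 1" by (simp add: norm_eq_1)
    qed
    show "f \<in> borel_measurable \<mu>" unfolding f_def by (intro meas) simp
  qed
  have expand: "(\<integral>x. (x \<bullet> y)^2 \<partial>distr \<mu> (restrict_space borel (sphere 0 1)) f)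
      = a^2 * (\<integral>x. (x \<bullet> y)^2 \<partial>\<mu>) + 2 * a * b * (z \<bullet> y) * (m \<bullet> y) + b^2 * (z \<bullet> y)^2" for y
  proof -
    have "(\<integral>x. (x \<bullet> y)^2 \<partial>distr \<mu> (restrict_space borel (sphere 0 1)) f) = (\<integral>x. (f x \<bullet> y)^2 \<partial>\<mu>)"
      by (rule integral_distr[OF fmeas]) (intro measurable_restrict_space1, simp)
    also have "\<dots> = (\<integral>x. a^2 * (x \<bullet> y)^2 + (2 * a * b * (z \<bullet> y)) * (x \<bullet> y) + b^2 * (z \<bullet> y)^2 \<partial>\<mu>)"
      unfolding f_def by (simp add: inner_add_left power2_eq_square algebra_simps)
    also have "\<dots> = a^2 * (\<integral>x. (x \<bullet> y)^2 \<partial>\<mu>) + (2 * a * b * (z \<bullet> y)) * (\<integral>x. x \<bullet> y \<partial>\<mu>) + b^2 * (z \<bullet> y)^2"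
      using int1 int2 by (simp add: P.prob_space)
    finally show ?thesis using im by simp
  qed
  have dimV: "real (dim V) = N - 1"
  proof -
    have "z \<noteq> 0" using assms(2) by auto
    then have "dim {x. z \<bullet> x = 0} = DIM('a) - 1" by (rule dim_hyperplane)
    moreover have "{x. z \<bullet> x = 0} = V" unfolding V_def by (auto simp: inner_commute)
    ultimately show ?thesis unfolding N_def using assms(1) by simp
  qed
  have dimU: "real (dim (UNIV::'a set)) = N" unfolding N_def by simp
  have fdef: "(\<lambda>x. sqrt ((real DIM('a) - 1) / real DIM('a)) *\<^sub>R x + (1 / sqrt (real DIM('a))) *\<^sub>R z) = f"
    unfolding f_def a_def b_def N_def ..
  show ?thesis
    unfolding fdef V_def[symmetric]
  proof
    assume H: "balanced \<mu> \<and> isotropic V \<mu>"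
    then have m0: "m = 0" and iso: "\<And>y. y \<in> V \<Longrightarrow> norm y = 1 \<Longrightarrow> (\<integral>x. (x \<bullet> y)^2 \<partial>\<mu>) = 1 / (N - 1)"
      unfolding balanced_def isotropic_def m_def dimV by auto
    show "isotropic UNIV (distr \<mu> (restrict_space borel (sphere 0 1)) f)"
      unfolding isotropic_def dimU
    proof (intro ballI impI)
      fix y :: 'a assume "norm y = 1"
      define t where "t = y \<bullet> z"
      define y' where "y' = y - t *\<^sub>R z"
      have y'V: "y' \<in> V" unfolding V_def y'_def t_def using zz by (simp add: inner_diff_left)
      have pyth: "y' \<bullet> y' + t^2 = 1"
        using \<open>norm y = 1\<close> zz y'V unfolding y'_def t_def V_def
        by (simp add: norm_eq_1 inner_diff_left inner_diff_right inner_commute power2_eq_square)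
      have eq1: "(\<integral>x. (x \<bullet> y)^2 \<partial>\<mu>) = (\<integral>x. (x \<bullet> y')^2 \<partial>\<mu>)"
        by (intro Bochner_Integration.integral_cong refl) (auto simp: y'_def nx inner_diff_right)
      have eq2: "(\<integral>x. (x \<bullet> y')^2 \<partial>\<mu>) = (y' \<bullet> y') / (N - 1)"
      proof (cases "y' = 0")
        case True then show ?thesis by simp
      next
        case False
        define u where "u = y' /\<^sub>R norm y'"
        have uV: "u \<in> V" using y'V unfolding u_def V_def by simp
        have un: "norm u = 1" using False unfolding u_def by simp
        have "(\<integral>x. (x \<bullet> y')^2 \<partial>\<mu>) = (\<integral>x. (norm y')^2 * (x \<bullet> u)^2 \<partial>\<mu>)"
          by (intro Bochner_Integration.integral_cong refl) (use False in \<open>simp add: u_def flip: power_mult_distrib mult.assoc\<close>)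
        also have "\<dots> = (norm y')^2 / (N - 1)" using iso[OF uV un] by simp
        finally show ?thesis by (simp add: power2_norm_eq_inner)
      qed
      have yy: "y' \<bullet> y' = 1 - t^2" using pyth by simp
      have "z \<bullet> y = t" unfolding t_def by (simp add: inner_commute)
      then show "(\<integral>x. (x \<bullet> y)^2 \<partial>distr \<mu> (restrict_space borel (sphere 0 1)) f) = 1 / N"
        unfolding expand eq1 eq2 m0 a2 b2 yy using N2
        by (simp add: field_simps)
    qed
  next
    assume H: "isotropic UNIV (distr \<mu> (restrict_space borel (sphere 0 1)) f)"
    have H': "\<And>y. norm y = 1 \<Longrightarrow> a^2 * (\<integral>x. (x \<bullet> y)^2 \<partial>\<mu>) + 2 * a * b * (z \<bullet> y) * (m \<bullet> y) + b^2 * (z \<bullet> y)^2 = 1 / N"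
      using H unfolding isotropic_def dimU expand by auto
    have iso: "(\<integral>x. (x \<bullet> u)^2 \<partial>\<mu>) = 1 / (N - 1)" if "u \<in> V" "norm u = 1" for u
    proof -
      have "z \<bullet> u = 0" using that unfolding V_def by (simp add: inner_commute)
      then have "a^2 * (\<integral>x. (x \<bullet> u)^2 \<partial>\<mu>) = 1 / N" using H'[OF that(2)] by simp
      then show ?thesis unfolding a2 using N2 by (simp add: field_simps)
    qed
    have "m = 0"
    proof (rule ccontr)
      assume "m \<noteq> 0"
      define u where "u = m /\<^sub>R norm m"
      have uV: "u \<in> V" using mz unfolding u_def V_def by simp
      have un: "norm u = 1" using \<open>m \<noteq> 0\<close> unfolding u_def by simp
      have uz: "u \<bullet> z = 0" "z \<bullet> u = 0" using uV unfolding V_def by (auto simp: inner_commute)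
      have mu: "m \<bullet> u = norm m" using \<open>m \<noteq> 0\<close> unfolding u_def by (simp add: power2_norm_eq_inner[symmetric] power2_eq_square)
      define y where "y = (1 / sqrt 2) *\<^sub>R (u + z)"
      have yn: "norm y = 1"
      proof -
        have "y \<bullet> y = (1/2) * (u \<bullet> u + 2 * (u \<bullet> z) + z \<bullet> z)"
          unfolding y_def by (simp add: inner_add_left inner_add_right inner_commute power2_eq_square)
        then show ?thesis using un zz uz by (simp add: norm_eq_1)
      qed
      have e1: "(\<integral>x. (x \<bullet> y)^2 \<partial>\<mu>) = (\<integral>x. (1/2) * (x \<bullet> u)^2 \<partial>\<mu>)"
        by (intro Bochner_Integration.integral_cong refl) (auto simp: y_def nx inner_add_right power_mult_distrib power_divide)
      have zy: "z \<bullet> y = 1 / sqrt 2" unfolding y_def using uz zz by (simp add: inner_add_right)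
      have my: "m \<bullet> y = norm m / sqrt 2" unfolding y_def using mu mz by (simp add: inner_add_right)
      have "a^2 * ((1/2) * (1 / (N - 1))) + 2 * a * b * (1 / sqrt 2) * (norm m / sqrt 2) + b^2 * (1 / sqrt 2)^2 = 1 / N"
        using H'[OF yn] unfolding e1 zy my using iso[OF uV un] by (simp add: mult.commute)
      then have "a * b * norm m = 0" unfolding a2 b2 using N2 by (simp add: field_simps power2_eq_square)
      then show False using ab \<open>m \<noteq> 0\<close> by auto
    qed
    then show "balanced \<mu> \<and> isotropic V \<mu>"
      unfolding balanced_def isotropic_def dimV m_def[symmetric] using iso by auto
  qed
qed

end
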